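(* There are absolute constants $B_0$ and $M$ such that the following holds. Let $k,k'$ be integers with $1\le k\le k'\le k+10$, and let $u_1=e^{ikx}e^{-k^2t}$, $u_2=e^{ik'y}e^{-(k')^2t}$, both solutions of $\dot u=\Delta u$. There exist a $C^2$ complex function $u$ and a continuous vector field $B$ with values in $\mathbb{C}^2$, $|B|\le B_0$, on $\mathbb{T}^2\times[0,\frac7{2k}]$, such that $\dot u=\Delta u+B\cdot\nabla u$ there, and: for $t\in[0,\frac1{2k}]$, $u=u_1$ and $B=0$; for $t\in[\frac3k,\frac7{2k}]$, $u=u_2$ and $B=0$; and for $t\in[0,\frac7{2k}]$, $u=f(t)e^{ikx}+g(t)e^{ik'y}$ with $f,g\in C^2$ satisfying, for $0\le\alpha\le2$, $|f^{(\alpha)}(t)|\le Mk^{2\alpha}e^{-k^2t}$ and $|g^{(\alpha)}(t)|\le M(k')^{2\alpha}e^{-(k')^2t}$.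
   Context: $\mathbb{T}^2=(\mathbb{R}/2\pi\mathbb{Z})^2$ with coordinates $(x,y)$; $t$ the third coordinate; $\dot u=\partial_tu$; $\Delta$ and $\nabla$ are in the spatial variables $(x,y)$, and $B\cdot\nabla u=B_1\partial_xu+B_2\partial_yu$. *)

theory Defs
  imports "HOL-Analysis.Analysis"
begin

definition C2_on :: "'a::real_normed_vector set \<Rightarrow> ('a \<Rightarrow> 'b::real_normed_vector) \<Rightarrow> bool" where
  "C2_on S f \<longleftrightarrow> (\<exists>D1 D2.
      (\<forall>p\<in>S. (f has_derivative blinfun_apply (D1 p)) (at p within S)) \<and>
      (\<forall>p\<in>S. (D1 has_derivative blinfun_apply (D2 p)) (at p within S)) \<and>
      continuous_on S D2)"

text \<open>Functions on T^2 x [0,T] are represented as 2pi-periodic functions u x y t.\<close>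
definition periodic2 :: "(real \<Rightarrow> real \<Rightarrow> real \<Rightarrow> 'b) \<Rightarrow> bool" where
  "periodic2 u \<longleftrightarrow> (\<forall>x y t. u (x + 2*pi) y t = u x y t \<and> u x (y + 2*pi) t = u x y t)"

definition pdx :: "(real \<Rightarrow> real \<Rightarrow> real \<Rightarrow> complex) \<Rightarrow> real \<Rightarrow> real \<Rightarrow> real \<Rightarrow> complex" where
  "pdx u x y t = vector_derivative (\<lambda>s. u s y t) (at x)"

definition pdy :: "(real \<Rightarrow> real \<Rightarrow> real \<Rightarrow> complex) \<Rightarrow> real \<Rightarrow> real \<Rightarrow> real \<Rightarrow> complex" where
  "pdy u x y t = vector_derivative (\<lambda>s. u x s t) (at y)"

definition pdt :: "real \<Rightarrow> (real \<Rightarrow> real \<Rightarrow> real \<Rightarrow> complex) \<Rightarrow> real \<Rightarrow> real \<Rightarrow> real \<Rightarrow> complex" where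
  "pdt T u x y t = vector_derivative (\<lambda>s. u x y s) (at t within {0..T})"

definition lap :: "(real \<Rightarrow> real \<Rightarrow> real \<Rightarrow> complex) \<Rightarrow> real \<Rightarrow> real \<Rightarrow> real \<Rightarrow> complex" where
  "lap u x y t = pdx (pdx u) x y t + pdy (pdy u) x y t"

definition dT :: "real \<Rightarrow> (real \<Rightarrow> complex) \<Rightarrow> real \<Rightarrow> complex" where
  "dT T h = (\<lambda>s. vector_derivative h (at s within {0..T}))"

end

theory Submission
  imports Defs
begin

lemma glue_deriv:
  fixes F G :: "real \<Rightarrow> real"
  assumes F: "\<And>x. (F has_real_derivative F' x) (at x)"
    and G: "\<And>x. (G has_real_derivative G' x) (at x)"
    and e: "F c = G c" "F' c = G' c"
  shows "((\<lambda>x. if x \<le> c then F x else G x) has_real_derivative (if x \<le> c then F' x else G' x)) (at x)"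
proof -
  let ?H = "\<lambda>x. if x \<le> c then F x else G x"
  consider "x < c" | "x > c" | "x = c" by linarith
  then show ?thesis
  proof cases
    case 1
    have "(?H has_real_derivative F' x) (at x within UNIV)"
      by (rule has_field_derivative_transform_within[OF F, of "c - x"]) (use 1 in \<open>auto simp: dist_real_def\<close>)
    then show ?thesis using 1 by simp
  next
    case 2
    have "(?H has_real_derivative G' x) (at x within UNIV)"
      by (rule has_field_derivative_transform_within[OF G, of "x - c"]) (use 2 in \<open>auto simp: dist_real_def\<close>)
    then show ?thesis using 2 by simp
  next
    case 3
    have l: "(?H has_real_derivative F' c) (at c within {..c})"
      by (rule has_field_derivative_transform_within[OF has_field_derivative_at_within[OF F], of 1]) auto
    have r: "(?H has_real_derivative G' c) (at c within {c..})"
      by (rule has_field_derivative_transform_within[OF has_field_derivative_at_within[OF G], of 1]) (use e in auto)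
    have "at c = sup (at c within {..c}) (at c within {c..})"
      by (metis at_within_union atLeast_iff atMost_iff UNIV_eq_I nle_le Un_iff)
    moreover have "((\<lambda>y. (?H y - ?H c) / (y - c)) \<longlongrightarrow> F' c) (sup (at c within {..c}) (at c within {c..}))"
      using l r e unfolding has_field_derivative_iff by (intro filterlim_sup) auto
    ultimately have "((\<lambda>y. (?H y - ?H c) / (y - c)) \<longlongrightarrow> F' c) (at c within UNIV)" by simp
    then have "(?H has_real_derivative F' c) (at c within UNIV)" by (simp only: has_field_derivative_iff)
    then show ?thesis using 3 by simp
  qed
qed

lemma glue_cont:
  fixes F G :: "real \<Rightarrow> real"
  assumes "continuous_on UNIV F" "continuous_on UNIV G" "F c = G c"
  shows "continuous_on UNIV (\<lambda>x. if x \<le> c then F x else G x)"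
  by (rule continuous_on_cases_le[where h="\<lambda>x. x"]) (use assms in \<open>auto intro: continuous_on_subset continuous_on_id\<close>)

definition P0 :: "real \<Rightarrow> real" where "P0 z = 10*z^3 - 15*z^4 + 6*z^5"
definition P1 :: "real \<Rightarrow> real" where "P1 z = 30*z^2 - 60*z^3 + 30*z^4"
definition P2 :: "real \<Rightarrow> real" where "P2 z = 60*z - 180*z^2 + 120*z^3"

lemma P0_der: "(P0 has_real_derivative P1 x) (at x)"
  unfolding P0_def P1_def by (auto intro!: derivative_eq_intros simp: algebra_simps)
lemma P1_der: "(P1 has_real_derivative P2 x) (at x)"
  unfolding P2_def P1_def by (auto intro!: derivative_eq_intros simp: algebra_simps)

definition hs :: "real \<Rightarrow> real" where "hs s = (if s \<le> 0 then 0 else if s \<le> 1 then P0 s else 1)"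
definition hs1 :: "real \<Rightarrow> real" where "hs1 s = (if s \<le> 0 then 0 else if s \<le> 1 then P1 s else 0)"
definition hs2 :: "real \<Rightarrow> real" where "hs2 s = (if s \<le> 0 then 0 else if s \<le> 1 then P2 s else 0)"

lemma hs_der: "(hs has_real_derivative hs1 x) (at x)"
proof -
  have i: "((\<lambda>s. if s \<le> 1 then P0 s else 1) has_real_derivative (if x \<le> 1 then P1 x else 0)) (at x)" for x
    by (rule glue_deriv[OF P0_der]) (auto simp: P0_def P1_def)
  show ?thesis unfolding hs_def[abs_def] hs1_def
    by (rule glue_deriv[OF _ i]) (auto simp: P0_def P1_def)
qed

lemma hs1_der: "(hs1 has_real_derivative hs2 x) (at x)"
proof -
  have i: "((\<lambda>s. if s \<le> 1 then P1 s else 0) has_real_derivative (if x \<le> 1 then P2 x else 0)) (at x)" for x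
    by (rule glue_deriv[OF P1_der]) (auto simp: P2_def P1_def)
  show ?thesis unfolding hs1_def[abs_def] hs2_def
    by (rule glue_deriv[OF _ i]) (auto simp: P2_def P1_def)
qed

lemma hs2_cont: "continuous_on UNIV hs2"
proof -
  have i: "continuous_on UNIV (\<lambda>s. if s \<le> 1 then P2 s else 0)"
    by (rule glue_cont) (auto simp: P2_def intro!: continuous_intros)
  show ?thesis unfolding hs2_def[abs_def]
    by (rule glue_cont[OF _ i]) (auto simp: P2_def)
qed

lemma hs_bounds: "0 \<le> hs z" "hs z \<le> 1" "\<bar>hs1 z\<bar> \<le> 2" "\<bar>hs2 z\<bar> \<le> 15"
proof -
  have a: "0 \<le> P0 z \<and> P0 z \<le> 1 \<and> \<bar>P1 z\<bar> \<le> 2 \<and> \<bar>P2 z\<bar> \<le> 15" if "0 \<le> z" "z \<le> 1"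
  proof -
    have "(z - 1/2)^2 \<ge> 0" by simp
    then have q1: "z*(1-z) \<le> 1/4" by (auto simp: algebra_simps power2_eq_square)
    have q2: "0 \<le> z*(1-z)" using that by simp
    note q = q1 q2
    have e0: "P0 z = z^3*(10 - 15*z + 6*z^2)" by (simp add: P0_def algebra_simps power_def)
    have f0: "10 - 15*z + 6*z^2 \<ge> 0"
    proof -
      have "6*(z-5/4)^2 \<ge> 0" by simp
      then show ?thesis by (simp add: power2_eq_square algebra_simps)
    qed
    have r1: "0 \<le> P0 z" unfolding e0 using f0 that by simp
    have e1: "1 - P0 z = (1-z)^3*(1 + 3*z + 6*z^2)" by (simp add: P0_def algebra_simps power_def)
    have "0 \<le> (1-z)^3*(1 + 3*z + 6*z^2)" using that by simp
    then have r2: "P0 z \<le> 1" using e1 by linarith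
    have e2: "P1 z = 30*((z*(1-z))*(z*(1-z)))" by (simp add: P1_def algebra_simps power_def)
    have "(z*(1-z))*(z*(1-z)) \<le> (1/4)*(1/4)" by (rule mult_mono) (use q in auto)
    moreover have "0 \<le> (z*(1-z))*(z*(1-z))" by simp
    ultimately have r3: "\<bar>P1 z\<bar> \<le> 2" unfolding e2 by linarith
    have e3: "P2 z = 60*((z*(1-z))*(1-2*z))" by (simp add: P2_def algebra_simps power_def)
    have "\<bar>1-2*z\<bar> \<le> 1" using that by simp
    then have "\<bar>z*(1-z)\<bar>*\<bar>1-2*z\<bar> \<le> (1/4)*1" by (intro mult_mono) (use q in auto)
    then have "\<bar>(z*(1-z))*(1-2*z)\<bar> \<le> (1/4)*1" by (simp only: abs_mult)
    then have r4: "\<bar>P2 z\<bar> \<le> 15" unfolding e3 by (simp add: abs_mult)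
    show ?thesis using r1 r2 r3 r4 by simp
  qed
  then show "0 \<le> hs z" "hs z \<le> 1" "\<bar>hs1 z\<bar> \<le> 2" "\<bar>hs2 z\<bar> \<le> 15"
    by (auto simp: hs_def hs1_def hs2_def)
qed

lemma C2_on_real:
  fixes F F1 F2 :: "real \<Rightarrow> complex"
  assumes d1: "\<And>t. (F has_vector_derivative F1 t) (at t)"
    and d2: "\<And>t. (F1 has_vector_derivative F2 t) (at t)"
    and c: "continuous_on UNIV F2"
  shows "C2_on S F"
  unfolding C2_on_def
proof (intro exI conjI ballI)
  fix t assume "t \<in> S"
  show "(F has_derivative blinfun_apply (blinfun_scaleR_left (F1 t))) (at t within S)"
    using d1[of t] by (auto simp: has_vector_derivative_def intro: has_derivative_at_withinI)
  have "((\<lambda>t. blinfun_scaleR_left (F1 t)) has_derivative (\<lambda>v. blinfun_scaleR_left (v *\<^sub>R F2 t))) (at t)"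
    using bounded_linear.has_derivative[OF bounded_linear_blinfun_scaleR_left d2[of t, unfolded has_vector_derivative_def]] .
  moreover have "(\<lambda>v. blinfun_scaleR_left (v *\<^sub>R F2 t)) = blinfun_apply (blinfun_scaleR_left (blinfun_scaleR_left (F2 t)))"
    by (intro ext blinfun_eqI) (simp add: blinfun.scaleR_left)
  ultimately show "((\<lambda>t. blinfun_scaleR_left (F1 t)) has_derivative blinfun_apply (blinfun_scaleR_left (blinfun_scaleR_left (F2 t)))) (at t within S)"
    by (auto intro: has_derivative_at_withinI)
next
  show "continuous_on S (\<lambda>t. blinfun_scaleR_left (blinfun_scaleR_left (F2 t)))"
    by (intro continuous_intros continuous_on_subset[OF c]) auto
qed

definition Rl :: "('a::real_normed_vector \<Rightarrow>\<^sub>L real) \<Rightarrow> complex \<Rightarrow>\<^sub>L ('a \<Rightarrow>\<^sub>L complex)" where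
  "Rl L = Blinfun (\<lambda>c. blinfun_scaleR_left c o\<^sub>L L)"

lemma Rl_apply: "blinfun_apply (Rl L) c = blinfun_scaleR_left c o\<^sub>L L"
proof -
  have bl: "bounded_linear (\<lambda>c. blinfun_scaleR_left c o\<^sub>L L)"
    by (rule bounded_linear_compose[OF bounded_bilinear.bounded_linear_left[OF bounded_bilinear_blinfun_compose] bounded_linear_blinfun_scaleR_left])
  then show ?thesis unfolding Rl_def by (simp add: bounded_linear_Blinfun_apply[OF bl])
qed

lemma Rl_apply2: "blinfun_apply (blinfun_apply (Rl L) c) v = L v *\<^sub>R c"
  by (simp add: Rl_apply)

lemma prod_der:
  fixes P Q :: "real \<Rightarrow> complex" and l1 l2 :: "'a::real_normed_vector \<Rightarrow>\<^sub>L real"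
  assumes "(P has_vector_derivative Pd) (at (l1 w))" "(Q has_vector_derivative Qd) (at (l2 w))"
  shows "((\<lambda>w. P (l1 w) * Q (l2 w)) has_derivative
     blinfun_apply (Rl l1 (Pd * Q (l2 w)) + Rl l2 (P (l1 w) * Qd))) (at w)"
proof -
  have a: "((\<lambda>w. P (l1 w)) has_derivative (\<lambda>v. l1 v *\<^sub>R Pd)) (at w)"
    using has_derivative_compose[OF bounded_linear_imp_has_derivative[OF blinfun.bounded_linear_right[of l1]] assms(1)[unfolded has_vector_derivative_def]] by simp
  have b: "((\<lambda>w. Q (l2 w)) has_derivative (\<lambda>v. l2 v *\<^sub>R Qd)) (at w)"
    using has_derivative_compose[OF bounded_linear_imp_has_derivative[OF blinfun.bounded_linear_right[of l2]] assms(2)[unfolded has_vector_derivative_def]] by simp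
  show ?thesis
    by (rule has_derivative_eq_rhs[OF has_derivative_mult[OF a b]])
       (auto simp: Rl_apply2 blinfun.add_left scaleR_conv_of_real algebra_simps)
qed

lemma C2_prod:
  fixes p p1 p2 q q1 q2 :: "real \<Rightarrow> complex" and l1 l2 :: "'a::real_normed_vector \<Rightarrow>\<^sub>L real"
  assumes dp1: "\<And>t. (p has_vector_derivative p1 t) (at t)"
    and dp2: "\<And>t. (p1 has_vector_derivative p2 t) (at t)"
    and cp: "continuous_on UNIV p2"
    and dq1: "\<And>t. (q has_vector_derivative q1 t) (at t)"
    and dq2: "\<And>t. (q1 has_vector_derivative q2 t) (at t)"
    and cq: "continuous_on UNIV q2"
  shows "C2_on S (\<lambda>w. p (l1 w) * q (l2 w))"
  unfolding C2_on_def
proof (intro exI conjI ballI)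
  let ?D1 = "\<lambda>w. Rl l1 (p1 (l1 w) * q (l2 w)) + Rl l2 (p (l1 w) * q1 (l2 w))"
  let ?M1 = "\<lambda>w. Rl l1 (p2 (l1 w) * q (l2 w)) + Rl l2 (p1 (l1 w) * q1 (l2 w))"
  let ?M2 = "\<lambda>w. Rl l1 (p1 (l1 w) * q1 (l2 w)) + Rl l2 (p (l1 w) * q2 (l2 w))"
  let ?D2 = "\<lambda>w. (Rl l1 o\<^sub>L ?M1 w) + (Rl l2 o\<^sub>L ?M2 w)"
  fix w assume "w \<in> S"
  show "((\<lambda>w. p (l1 w) * q (l2 w)) has_derivative blinfun_apply (?D1 w)) (at w within S)"
    by (rule has_derivative_at_withinI[OF prod_der[OF dp1 dq1]])
  have a: "((\<lambda>w. p1 (l1 w) * q (l2 w)) has_derivative blinfun_apply (?M1 w)) (at w)"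
    by (rule prod_der[OF dp2 dq1])
  have b: "((\<lambda>w. p (l1 w) * q1 (l2 w)) has_derivative blinfun_apply (?M2 w)) (at w)"
    by (rule prod_der[OF dp1 dq2])
  have "(?D1 has_derivative (\<lambda>v. Rl l1 (?M1 w v) + Rl l2 (?M2 w v))) (at w)"
    by (intro has_derivative_add bounded_linear.has_derivative[OF blinfun.bounded_linear_right] a b)
  moreover have "(\<lambda>v. Rl l1 (?M1 w v) + Rl l2 (?M2 w v)) = blinfun_apply (?D2 w)"
    by (simp add: fun_eq_iff blinfun.add_left)
  ultimately show "(?D1 has_derivative blinfun_apply (?D2 w)) (at w within S)"
    by (auto intro: has_derivative_at_withinI)
next
  have cont_all: "\<And>F F'. (\<And>t. (F has_vector_derivative F' t) (at t)) \<Longrightarrow> continuous_on UNIV F"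
    by (meson continuous_at_imp_continuous_on has_vector_derivative_continuous)
  have comp: "\<And>F (l::'a \<Rightarrow>\<^sub>L real). continuous_on UNIV F \<Longrightarrow> continuous_on S (\<lambda>w. F (l w))"
    by (rule continuous_on_compose2[of UNIV]) (auto intro: continuous_intros)
  have c1: "continuous_on S (\<lambda>w. p2 (l1 w))" "continuous_on S (\<lambda>w. q2 (l2 w))"
    by (auto intro!: comp cp cq)
  have c2: "continuous_on S (\<lambda>w. p1 (l1 w))" "continuous_on S (\<lambda>w. q1 (l2 w))"
     "continuous_on S (\<lambda>w. p (l1 w))" "continuous_on S (\<lambda>w. q (l2 w))"
    by (intro comp cont_all, rule dp2 dq2 dp1 dq1)+
  show "continuous_on S (\<lambda>w. (Rl l1 o\<^sub>L (Rl l1 (p2 (l1 w) * q (l2 w)) + Rl l2 (p1 (l1 w) * q1 (l2 w)))) +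
      (Rl l2 o\<^sub>L (Rl l1 (p1 (l1 w) * q1 (l2 w)) + Rl l2 (p (l1 w) * q2 (l2 w)))))"
    using c1 c2 by (intro continuous_intros) auto
qed

lemma C2_on_add:
  assumes "C2_on S f" "C2_on S g"
  shows "C2_on S (\<lambda>w. f w + g w)"
proof -
  obtain A1 A2 where A: "\<forall>p\<in>S. (f has_derivative blinfun_apply (A1 p)) (at p within S)"
    "\<forall>p\<in>S. (A1 has_derivative blinfun_apply (A2 p)) (at p within S)" "continuous_on S A2"
    using assms(1) unfolding C2_on_def by blast
  obtain B1 B2 where B: "\<forall>p\<in>S. (g has_derivative blinfun_apply (B1 p)) (at p within S)"
    "\<forall>p\<in>S. (B1 has_derivative blinfun_apply (B2 p)) (at p within S)" "continuous_on S B2"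
    using assms(2) unfolding C2_on_def by blast
  show ?thesis unfolding C2_on_def
    apply (rule exI[of _ "\<lambda>p. A1 p + B1 p"], rule exI[of _ "\<lambda>p. A2 p + B2 p"])
  proof (intro conjI ballI)
    fix p assume p: "p \<in> S"
    show "((\<lambda>w. f w + g w) has_derivative blinfun_apply (A1 p + B1 p)) (at p within S)"
      using A(1) B(1) p by (auto intro!: has_derivative_eq_rhs[OF has_derivative_add] simp: blinfun.add_left fun_eq_iff)
    show "((\<lambda>p. A1 p + B1 p) has_derivative blinfun_apply (A2 p + B2 p)) (at p within S)"
      using A(2) B(2) p by (auto intro!: has_derivative_eq_rhs[OF has_derivative_add] simp: blinfun.add_left fun_eq_iff)
  next
    show "continuous_on S (\<lambda>p. A2 p + B2 p)" using A(3) B(3) by (rule continuous_on_add)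
  qed
qed

lemma hs_cont: "continuous_on UNIV hs" "continuous_on UNIV hs1"
  by (meson continuous_at_imp_continuous_on DERIV_isCont hs_der hs1_der)+

lemma hs_regions: "z \<le> 0 \<Longrightarrow> hs z = 0" "z \<ge> 1 \<Longrightarrow> hs z = 1"
  "z \<le> 0 \<Longrightarrow> hs1 z = 0" "z \<ge> 1 \<Longrightarrow> hs1 z = 0"
  by (auto simp: hs_def hs1_def P0_def P1_def)

definition Ephi :: "real \<Rightarrow> real \<Rightarrow> complex" where "Ephi c x = exp (\<i> * of_real (c * x))"

lemma Ephi_der: "(Ephi c has_vector_derivative (\<i> * of_real c) * Ephi c x) (at x)"
proof -
  have "((\<lambda>z. exp (\<i> * of_real c * z)) has_field_derivative (\<i> * of_real c) * exp (\<i> * of_real c * of_real x)) (at (of_real x))"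
    by (auto intro!: derivative_eq_intros)
  from has_vector_derivative_real_field[OF this, where s=UNIV] show ?thesis
    by (simp add: Ephi_def[abs_def] mult.assoc)
qed

lemma Ephi_der1: "((\<lambda>x. (\<i> * of_real c) * Ephi c x) has_vector_derivative (\<i> * of_real c) * ((\<i> * of_real c) * Ephi c x)) (at x)"
  using has_vector_derivative_mult_right[OF Ephi_der] by simp

lemma Ephi_der2: "((\<lambda>x. (\<i> * of_real c) * ((\<i> * of_real c) * Ephi c x)) has_vector_derivative (\<i> * of_real c) * ((\<i> * of_real c) * ((\<i> * of_real c) * Ephi c x))) (at x)"
  using has_vector_derivative_mult_right[OF Ephi_der1] by simp

lemma Ephi_cont: "continuous_on UNIV (Ephi c)"
  unfolding Ephi_def[abs_def] by (intro continuous_intros)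

lemma Ephi_norm[simp]: "norm (Ephi c x) = 1"
  unfolding Ephi_def by (rule norm_exp_i_times)

lemma Ephi_per: "Ephi (real_of_int n) (x + 2*pi) = Ephi (real_of_int n) x"
proof -
  have "Ephi (real_of_int n) (x + 2*pi) = Ephi (real_of_int n) x * exp ((2 * of_int n * pi) * \<i>)"
    unfolding Ephi_def by (simp add: exp_add[symmetric] algebra_simps)
  also have "exp ((2 * of_int n * pi) * \<i>) = 1" by (rule exp_integer_2pi) simp
  finally show ?thesis by simp
qed

lemma Ephi_inv: "Ephi (-c) x * Ephi c x = 1"
  unfolding Ephi_def by (simp add: exp_add[symmetric])

lemma ef_der:
  fixes A A1 :: "real \<Rightarrow> real"
  assumes "\<And>t. (A has_real_derivative A1 t) (at t)"
  shows "((\<lambda>t. A t * exp (- L * t)) has_real_derivative ((A1 t - L * A t) * exp (- L * t))) (at t)"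
  using assms[of t] by (auto intro!: derivative_eq_intros simp: algebra_simps)

lemma gen_bounds:
  fixes A A1 A2 R :: real
  assumes "\<bar>A\<bar> \<le> 1" "\<bar>A1\<bar> \<le> 2*R" "\<bar>A2\<bar> \<le> 15*R^2" "R \<ge> 1"
  shows "\<bar>A\<bar> \<le> 20" "\<bar>A1 - R^2 * A\<bar> \<le> 20 * R^2"
    "\<bar>A2 - 2 * R^2 * A1 + (R^2)^2 * A\<bar> \<le> 20 * R^4"
proof -
  have r2: "R \<le> R^2" "R^2 \<le> R^3" "R^3 \<le> R^4" "1 \<le> R^2"
  proof -
    have "R \<le> R*R" "R*R \<le> R*(R*R)" "R*(R*R) \<le> R*(R*(R*R))" "1 \<le> R*R"
    proof -
      have a: "1 \<le> R*R" using assms(4) mult_mono[of 1 R 1 R] by simp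
      have b: "1 \<le> R*(R*R)" using assms(4) a mult_mono[of 1 R 1 "R*R"] by simp
      show "R \<le> R*R" "R*R \<le> R*(R*R)" "R*(R*R) \<le> R*(R*(R*R))" "1 \<le> R*R"
        using a b assms(4) mult_left_mono[of 1 "R*R" R] mult_left_mono[of 1 R "R*R"] mult_left_mono[of 1 R "R*(R*R)"] by (auto simp: ac_simps)
    qed
    then show "R \<le> R^2" "R^2 \<le> R^3" "R^3 \<le> R^4" "1 \<le> R^2"
      by (simp_all add: power_def)
  qed
  have "\<bar>R^2 * A\<bar> \<le> R^2" using assms(1) by (simp add: abs_mult mult_left_le)
  then show "\<bar>A1 - R^2 * A\<bar> \<le> 20 * R^2" using assms r2 by linarith
  show "\<bar>A\<bar> \<le> 20" using assms by linarith
  have "\<bar>(R^2)^2 * A\<bar> \<le> R^4" using assms(1) by (simp add: abs_mult mult_left_le power_mult[symmetric])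
  moreover have "\<bar>2 * R^2 * A1\<bar> \<le> 2 * R^2 * (2*R)" 
  proof -
    have "\<bar>2 * R^2 * A1\<bar> = (2 * R^2) * \<bar>A1\<bar>" by (simp add: abs_mult)
    also have "\<dots> \<le> 2 * R^2 * (2*R)" using assms(2) by (intro mult_left_mono) auto
    finally show ?thesis .
  qed
  moreover have "2 * R^2 * (2*R) = 4 * R^3" by (simp add: power_def)
  ultimately show "\<bar>A2 - 2 * R^2 * A1 + (R^2)^2 * A\<bar> \<le> 20 * R^4" using assms r2 by linarith
qed

lemma hs_comp_der:
  "((\<lambda>t. hs (r*t - c)) has_real_derivative hs1 (r*t - c) * r) (at t)"
  "((\<lambda>t. hs1 (r*t - c)) has_real_derivative hs2 (r*t - c) * r) (at t)"
  by (rule DERIV_chain2[OF hs_der], auto intro!: derivative_eq_intros)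
     (rule DERIV_chain2[OF hs1_der], auto intro!: derivative_eq_intros)

lemma cont_comp: "continuous_on UNIV F \<Longrightarrow> continuous_on UNIV (\<lambda>t::real. F (r*t - c))"
  by (rule continuous_on_compose2[of UNIV]) (auto intro!: continuous_intros)

definition "aa r t = 1 - hs (r*t - 3/2)"
definition "aa1 r t = - (hs1 (r*t - 3/2) * r)"
definition "aa2 r t = - (hs2 (r*t - 3/2) * r * r)"
definition "bb r t = hs (r*t - 1/2)"
definition "bb1 r t = hs1 (r*t - 1/2) * r"
definition "bb2 r t = hs2 (r*t - 1/2) * r * r"

lemma aabb_der:
  "(aa r has_real_derivative aa1 r t) (at t)" "(aa1 r has_real_derivative aa2 r t) (at t)"
  "(bb r has_real_derivative bb1 r t) (at t)" "(bb1 r has_real_derivative bb2 r t) (at t)"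
  unfolding aa_def[abs_def] aa1_def[abs_def] aa2_def bb_def[abs_def] bb1_def[abs_def] bb2_def
  using hs_comp_der[of r "3/2" t] hs_comp_der[of r "1/2" t]
  by (auto intro!: derivative_eq_intros)

lemma aabb_cont: "continuous_on UNIV (aa2 r)" "continuous_on UNIV (bb2 r)"
  unfolding aa2_def[abs_def] bb2_def[abs_def]
  by (intro continuous_intros cont_comp hs2_cont)+

lemma aabb_cont1: "continuous_on UNIV (aa1 r)" "continuous_on UNIV (bb1 r)"
  unfolding aa1_def[abs_def] bb1_def[abs_def]
  by (intro continuous_intros cont_comp hs_cont)+

definition "FF L A t = complex_of_real (A t * exp (- L * t))"
definition "FF1 L A A1 t = complex_of_real ((A1 t - L * A t) * exp (- L * t))"
definition "FF2 L A A1 A2 t = complex_of_real (((A2 t - L * A1 t) - L * (A1 t - L * A t)) * exp (- L * t))"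

lemma FF_ders:
  assumes d1: "\<And>t. (A has_real_derivative A1 t) (at t)"
    and d2: "\<And>t. (A1 has_real_derivative A2 t) (at t)"
    and c: "continuous_on UNIV A2"
  shows "(FF L A has_vector_derivative FF1 L A A1 t) (at t)"
    "(FF1 L A A1 has_vector_derivative FF2 L A A1 A2 t) (at t)"
    "continuous_on UNIV (FF2 L A A1 A2)"
proof -
  show "(FF L A has_vector_derivative FF1 L A A1 t) (at t)"
    unfolding FF_def[abs_def] FF1_def by (intro has_vector_derivative_of_real ef_der d1)
  have "((\<lambda>t. A1 t - L * A t) has_real_derivative (A2 t - L * A1 t)) (at t)" for t
    using d1 d2 by (auto intro!: derivative_eq_intros)
  then show "(FF1 L A A1 has_vector_derivative FF2 L A A1 A2 t) (at t)"
    unfolding FF2_def FF1_def[abs_def] by (intro has_vector_derivative_of_real ef_der)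
  have ca: "continuous_on UNIV A" "continuous_on UNIV A1"
    using d1 d2 by (meson continuous_at_imp_continuous_on DERIV_isCont)+
  show "continuous_on UNIV (FF2 L A A1 A2)"
    unfolding FF2_def[abs_def] using c ca by (intro continuous_intros) auto
qed

lemma dT_facts:
  assumes d1: "\<And>t. (F has_vector_derivative F1 t) (at t)"
    and d2: "\<And>t. (F1 has_vector_derivative F2 t) (at t)"
    and T: "0 < T" and t: "t \<in> {0..T}"
  shows "dT T F t = F1 t" "dT T (dT T F) t = F2 t"
proof -
  have e: "dT T F s = F1 s" if "s \<in> {0..T}" for s
    unfolding dT_def using that T by (auto intro!: vector_derivative_at_within_ivl[OF d1])
  then show "dT T F t = F1 t" using t by blast
  have "(dT T F has_vector_derivative F2 t) (at t within {0..T})"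
    by (rule has_vector_derivative_transform[OF t e]) (auto intro: has_vector_derivative_at_within[OF d2])
  then show "dT T (dT T F) t = F2 t"
    unfolding dT_def[of T "dT T F"] using T t
    by (metis vector_derivative_within_cbox cbox_interval)
qed

lemma FF_bounds:
  fixes R :: real
  assumes "\<bar>A t\<bar> \<le> 1" "\<bar>A1 t\<bar> \<le> 2*R" "\<bar>A2 t\<bar> \<le> 15*R^2" "R \<ge> 1"
  shows "norm (FF (R^2) A t) \<le> 20 * R^(2*0) * exp (- (R^2) * t)"
    "norm (FF1 (R^2) A A1 t) \<le> 20 * R^(2*1) * exp (- (R^2) * t)"
    "norm (FF2 (R^2) A A1 A2 t) \<le> 20 * R^(2*2) * exp (- (R^2) * t)"
proof -
  note gb = gen_bounds[OF assms]
  show "norm (FF (R^2) A t) \<le> 20 * R^(2*0) * exp (- (R^2) * t)"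
    unfolding FF_def norm_of_real abs_mult using gb(1) by simp
  show "norm (FF1 (R^2) A A1 t) \<le> 20 * R^(2*1) * exp (- (R^2) * t)"
    unfolding FF1_def norm_of_real abs_mult using gb(2) by simp
  have eq: "(A2 t - R^2 * A1 t) - R^2 * (A1 t - R^2 * A t) = A2 t - 2 * R^2 * A1 t + (R^2)^2 * A t"
    by (simp add: algebra_simps power2_eq_square)
  show "norm (FF2 (R^2) A A1 A2 t) \<le> 20 * R^(2*2) * exp (- (R^2) * t)"
    unfolding FF2_def norm_of_real abs_mult eq using gb(3) by simp
qed

theorem mainTheorem16:
  shows "\<exists>B0 M :: real. \<forall>k k' :: int. 1 \<le> k \<and> k \<le> k' \<and> k' \<le> k + 10 \<longrightarrow>
   (let T = 7 / (2 * real_of_int k);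
        S = {p :: real \<times> real \<times> real. 0 \<le> snd (snd p) \<and> snd (snd p) \<le> T};
        u1 = (\<lambda>x y t. exp (\<i> * of_real (real_of_int k * x)) * of_real (exp (- (real_of_int k)\<^sup>2 * t)));
        u2 = (\<lambda>x y t. exp (\<i> * of_real (real_of_int k' * y)) * of_real (exp (- (real_of_int k')\<^sup>2 * t)))
    in \<exists>(u :: real \<Rightarrow> real \<Rightarrow> real \<Rightarrow> complex) (B :: real \<Rightarrow> real \<Rightarrow> real \<Rightarrow> complex \<times> complex)
         (f :: real \<Rightarrow> complex) (g :: real \<Rightarrow> complex).
       periodic2 u \<and> periodic2 B \<and>
       C2_on S (\<lambda>(x, y, t). u x y t) \<and>
       continuous_on S (\<lambda>(x, y, t). B x y t) \<and>
       (\<forall>x y t. t \<in> {0..T} \<longrightarrow> norm (B x y t) \<le> B0) \<and>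
       (\<forall>x y t. t \<in> {0..T} \<longrightarrow>
          pdt T u x y t = lap u x y t + fst (B x y t) * pdx u x y t + snd (B x y t) * pdy u x y t) \<and>
       (\<forall>x y t. t \<in> {0..1 / (2 * real_of_int k)} \<longrightarrow> u x y t = u1 x y t \<and> B x y t = 0) \<and>
       (\<forall>x y t. t \<in> {3 / real_of_int k..T} \<longrightarrow> u x y t = u2 x y t \<and> B x y t = 0) \<and>
       C2_on {0..T} f \<and> C2_on {0..T} g \<and>
       (\<forall>x y t. t \<in> {0..T} \<longrightarrow>
          u x y t = f t * exp (\<i> * of_real (real_of_int k * x)) + g t * exp (\<i> * of_real (real_of_int k' * y))) \<and>
       (\<forall>\<alpha>::nat. \<forall>t. \<alpha> \<le> 2 \<and> t \<in> {0..T} \<longrightarrow>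
          norm (((dT T) ^^ \<alpha>) f t) \<le> M * (real_of_int k) ^ (2 * \<alpha>) * exp (- (real_of_int k)\<^sup>2 * t) \<and>
          norm (((dT T) ^^ \<alpha>) g t) \<le> M * (real_of_int k') ^ (2 * \<alpha>) * exp (- (real_of_int k')\<^sup>2 * t)))"
proof (rule exI[of _ "2 + 2 * exp 420"], rule exI[of _ 20], intro allI impI)
  fix k k' :: int
  assume kk: "1 \<le> k \<and> k \<le> k' \<and> k' \<le> k + 10"
  define r where "r = real_of_int k"
  define r' where "r' = real_of_int k'"
  have r: "1 \<le> r" "r \<le> r'" "r' \<le> r + 10" using kk by (auto simp: r_def r'_def)
  define T where "T = 7 / (2 * r)"
  have T: "0 < T" using r by (simp add: T_def)
  define S where "S = {p :: real \<times> real \<times> real. 0 \<le> snd (snd p) \<and> snd (snd p) \<le> T}"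
  define f where "f = FF (r^2) (aa r)"
  define f1 where "f1 = FF1 (r^2) (aa r) (aa1 r)"
  define f2 where "f2 = FF2 (r^2) (aa r) (aa1 r) (aa2 r)"
  define g where "g = FF (r'^2) (bb r)"
  define g1 where "g1 = FF1 (r'^2) (bb r) (bb1 r)"
  define g2 where "g2 = FF2 (r'^2) (bb r) (bb1 r) (bb2 r)"
  have fd: "\<And>t. (f has_vector_derivative f1 t) (at t)" "\<And>t. (f1 has_vector_derivative f2 t) (at t)"
     "continuous_on UNIV f2"
    unfolding f_def f1_def f2_def using FF_ders[OF aabb_der(1,2) aabb_cont(1)] by auto
  have gd: "\<And>t. (g has_vector_derivative g1 t) (at t)" "\<And>t. (g1 has_vector_derivative g2 t) (at t)"
     "continuous_on UNIV g2"
    unfolding g_def g1_def g2_def using FF_ders[OF aabb_der(3,4) aabb_cont(2)] by auto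
  define u where "u = (\<lambda>x y t. f t * Ephi r x + g t * Ephi r' y)"
  define c1 where "c1 = (\<lambda>t. complex_of_real (bb1 r t * exp ((r^2 - r'^2) * t) / r))"
  define c2 where "c2 = (\<lambda>t. complex_of_real (aa1 r t * exp ((r'^2 - r^2) * t) / r'))"
  define B where "B = (\<lambda>x y t. (c1 t * (-\<i>) * Ephi r' y * Ephi (-r) x, c2 t * (-\<i>) * Ephi r x * Ephi (-r') y))"
  have P1: "periodic2 u"
    using Ephi_per[of k] Ephi_per[of k'] by (simp add: periodic2_def u_def r_def r'_def)
  have P2: "periodic2 B"
    using Ephi_per[of k] Ephi_per[of k'] Ephi_per[of "-k"] Ephi_per[of "-k'"]
    by (simp add: periodic2_def B_def r_def r'_def)
  define lx :: "(real \<times> real \<times> real) \<Rightarrow>\<^sub>L real" where "lx = Blinfun fst"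
  define ly :: "(real \<times> real \<times> real) \<Rightarrow>\<^sub>L real" where "ly = Blinfun (\<lambda>w. fst (snd w))"
  define lt :: "(real \<times> real \<times> real) \<Rightarrow>\<^sub>L real" where "lt = Blinfun (\<lambda>w. snd (snd w))"
  have bl: "blinfun_apply lx = fst" "blinfun_apply ly = (\<lambda>w. fst (snd w))" "blinfun_apply lt = (\<lambda>w. snd (snd w))"
    unfolding lx_def ly_def lt_def
    by (auto intro!: bounded_linear_Blinfun_apply bounded_linear_fst bounded_linear_compose[OF bounded_linear_fst bounded_linear_snd]
        bounded_linear_compose[OF bounded_linear_snd bounded_linear_snd])
  have P3: "C2_on S (\<lambda>(x, y, t). u x y t)"
  proof -
    have e: "(\<lambda>(x, y, t). u x y t) = (\<lambda>w. f (lt w) * Ephi r (lx w) + g (lt w) * Ephi r' (ly w))"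
      by (auto simp: fun_eq_iff u_def bl)
    have ce: "continuous_on UNIV (\<lambda>x. (\<i> * of_real c) * ((\<i> * of_real c) * Ephi c x))" for c
      using Ephi_cont[of c] by (intro continuous_intros) auto
    show ?thesis unfolding e
      by (intro C2_on_add C2_prod[OF fd Ephi_der Ephi_der1 ce] C2_prod[OF gd Ephi_der Ephi_der1 ce])
  qed
  have c12: "continuous_on UNIV c1" "continuous_on UNIV c2"
    unfolding c1_def c2_def using aabb_cont1[of r] r by (auto intro!: continuous_intros)
  have P4: "continuous_on S (\<lambda>(x, y, t). B x y t)"
  proof -
    have e: "(\<lambda>(x, y, t). B x y t) = (\<lambda>w. (c1 (snd (snd w)) * (-\<i>) * Ephi r' (fst (snd w)) * Ephi (-r) (fst w),
        c2 (snd (snd w)) * (-\<i>) * Ephi r (fst w) * Ephi (-r') (fst (snd w))))"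
      by (auto simp: fun_eq_iff B_def)
    have cc: "continuous_on S (\<lambda>w. c1 (snd (snd w)))" "continuous_on S (\<lambda>w. c2 (snd (snd w)))"
      by (auto intro!: continuous_on_compose2[OF c12(1)] continuous_on_compose2[OF c12(2)] continuous_intros)
    show ?thesis unfolding e Ephi_def using cc by (intro continuous_intros) auto
  qed
  have P5: "\<forall>x y t. t \<in> {0..T} \<longrightarrow> norm (B x y t) \<le> 2 + 2 * exp 420"
  proof (intro allI impI)
    fix x y t assume t: "t \<in> {0..T}"
    have t0: "0 \<le> t" "t \<le> T" using t by auto
    have rt: "r * t \<le> 7/2" using t0 r unfolding T_def by (auto simp: field_simps)
    have "r^2 \<le> r'^2" using r by (intro power_mono) auto
    then have "(r^2 - r'^2) * t \<le> 0" using t0 by (intro mult_nonpos_nonneg) auto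
    then have e1: "exp ((r^2 - r'^2) * t) \<le> 1" by simp
    have "r'^2 - r^2 = (r' - r) * (r' + r)" by (simp add: power2_eq_square algebra_simps)
    also have "\<dots> \<le> 10 * (12 * r)" using r by (intro mult_mono) auto
    finally have "(r'^2 - r^2) * t \<le> (120 * r) * t" using t0 by (intro mult_right_mono) auto
    also have "\<dots> \<le> 420" using rt by simp
    finally have e2: "exp ((r'^2 - r^2) * t) \<le> exp 420" by simp
    have h1: "\<bar>hs1 z\<bar> \<le> 2" for z by (rule hs_bounds)
    have n1: "norm (c1 t) \<le> 2"
    proof -
      have "norm (c1 t) = \<bar>hs1 (r*t - 1/2)\<bar> * exp ((r^2 - r'^2) * t)"
        using r unfolding c1_def norm_of_real by (simp add: bb1_def abs_mult)
      also have "\<dots> \<le> 2 * 1" using h1 e1 by (intro mult_mono) auto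
      finally show ?thesis by simp
    qed
    have n2: "norm (c2 t) \<le> 2 * exp 420"
    proof -
      have "norm (c2 t) = \<bar>hs1 (r*t - 3/2)\<bar> * (r / r') * exp ((r'^2 - r^2) * t)"
        using r unfolding c2_def norm_of_real by (simp add: aa1_def abs_mult)
      also have "\<dots> \<le> 2 * 1 * exp 420" using h1 e2 r by (intro mult_mono) auto
      finally show ?thesis by simp
    qed
    have "norm (B x y t) \<le> norm (c1 t * (-\<i>) * Ephi r' y * Ephi (-r) x) + norm (c2 t * (-\<i>) * Ephi r x * Ephi (-r') y)"
      unfolding B_def by (rule norm_Pair_le)
    also have "\<dots> = norm (c1 t) + norm (c2 t)" by (simp add: norm_mult)
    finally show "norm (B x y t) \<le> 2 + 2 * exp 420" using n1 n2 by linarith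
  qed
  have P6: "\<forall>x y t. t \<in> {0..T} \<longrightarrow>
          pdt T u x y t = lap u x y t + fst (B x y t) * pdx u x y t + snd (B x y t) * pdy u x y t"
  proof (intro allI impI)
    fix x y t assume t: "t \<in> {0..T}"
    have pdxu: "pdx u = (\<lambda>x y t. f t * ((\<i> * of_real r) * Ephi r x))"
    proof (intro ext)
      fix x y t
      have "((\<lambda>s. u s y t) has_vector_derivative f t * ((\<i> * of_real r) * Ephi r x) + 0) (at x)"
        unfolding u_def by (intro has_vector_derivative_add has_vector_derivative_mult_right Ephi_der has_vector_derivative_const)
      then show "pdx u x y t = f t * ((\<i> * of_real r) * Ephi r x)"
        unfolding pdx_def by (simp add: vector_derivative_at)
    qed
    have pdxxu: "pdx (pdx u) x y t = f t * ((\<i> * of_real r) * ((\<i> * of_real r) * Ephi r x))"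
    proof -
      have "((\<lambda>s. pdx u s y t) has_vector_derivative f t * ((\<i> * of_real r) * ((\<i> * of_real r) * Ephi r x))) (at x)"
        unfolding pdxu by (intro has_vector_derivative_mult_right Ephi_der1)
      then show ?thesis unfolding pdx_def[of "pdx u"] by (simp add: vector_derivative_at)
    qed
    have pdyu: "pdy u = (\<lambda>x y t. g t * ((\<i> * of_real r') * Ephi r' y))"
    proof (intro ext)
      fix x y t
      have "((\<lambda>s. u x s t) has_vector_derivative 0 + g t * ((\<i> * of_real r') * Ephi r' y)) (at y)"
        unfolding u_def by (intro has_vector_derivative_add has_vector_derivative_mult_right Ephi_der has_vector_derivative_const)
      then show "pdy u x y t = g t * ((\<i> * of_real r') * Ephi r' y)"
        unfolding pdy_def by (simp add: vector_derivative_at)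
    qed
    have pdyyu: "pdy (pdy u) x y t = g t * ((\<i> * of_real r') * ((\<i> * of_real r') * Ephi r' y))"
    proof -
      have "((\<lambda>s. pdy u x s t) has_vector_derivative g t * ((\<i> * of_real r') * ((\<i> * of_real r') * Ephi r' y))) (at y)"
        unfolding pdyu by (intro has_vector_derivative_mult_right Ephi_der1)
      then show ?thesis unfolding pdy_def[of "pdy u"] by (simp add: vector_derivative_at)
    qed
    have pdtu: "pdt T u x y t = f1 t * Ephi r x + g1 t * Ephi r' y"
    proof -
      have "((\<lambda>s. u x y s) has_vector_derivative f1 t * Ephi r x + g1 t * Ephi r' y) (at t)"
        unfolding u_def by (intro has_vector_derivative_add has_vector_derivative_mult_left fd gd)
      then show ?thesis unfolding pdt_def using t T by (auto intro: vector_derivative_at_within_ivl)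
    qed
    have ab1: "aa r t * bb1 r t = bb1 r t" "aa1 r t * bb r t = aa1 r t"
    proof -
      show "aa r t * bb1 r t = bb1 r t"
      proof (cases "r*t - 1/2 \<le> 0 \<or> r*t - 1/2 \<ge> 1")
        case True then show ?thesis by (auto simp: bb1_def hs_regions)
      next
        case False then show ?thesis by (auto simp: aa_def hs_regions)
      qed
      show "aa1 r t * bb r t = aa1 r t"
      proof (cases "r*t - 3/2 \<le> 0 \<or> r*t - 3/2 \<ge> 1")
        case True then show ?thesis by (auto simp: aa1_def hs_regions)
      next
        case False then show ?thesis by (auto simp: bb_def hs_regions)
      qed
    qed
    have X1: "bb1 r t * exp ((r^2 - r'^2) * t) * aa r t * exp (- (r^2) * t) = bb1 r t * exp (- (r'^2) * t)"
    proof -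
      have "bb1 r t * exp ((r^2 - r'^2) * t) * aa r t * exp (- (r^2) * t) = (aa r t * bb1 r t) * exp ((r^2 - r'^2) * t + - (r^2) * t)"
        by (simp only: exp_add mult_ac)
      also have "(r^2 - r'^2) * t + - (r^2) * t = - (r'^2) * t" by (simp add: algebra_simps)
      finally show ?thesis using ab1 by simp
    qed
    have X2: "aa1 r t * exp ((r'^2 - r^2) * t) * bb r t * exp (- (r'^2) * t) = aa1 r t * exp (- (r^2) * t)"
    proof -
      have "aa1 r t * exp ((r'^2 - r^2) * t) * bb r t * exp (- (r'^2) * t) = (aa1 r t * bb r t) * exp ((r'^2 - r^2) * t + - (r'^2) * t)"
        by (simp only: exp_add mult_ac)
      also have "(r'^2 - r^2) * t + - (r'^2) * t = - (r^2) * t" by (simp add: algebra_simps)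
      finally show ?thesis using ab1 by simp
    qed
    have ii: "(-\<i>) * (\<i> * z) = z" for z by (simp add: algebra_simps)
    have k1: "fst (B x y t) * pdx u x y t = of_real (bb1 r t * exp ((r^2 - r'^2) * t) * aa r t * exp (- (r^2) * t)) * Ephi r' y"
    proof -
      have "fst (B x y t) * pdx u x y t = ((-\<i>) * (\<i> * (c1 t * of_real r * f t * Ephi r' y))) * (Ephi (-r) x * Ephi r x)"
        unfolding B_def pdxu by (simp add: ac_simps)
      also have "\<dots> = c1 t * of_real r * f t * Ephi r' y" by (simp only: ii Ephi_inv mult_1_right)
      also have "c1 t * of_real r * f t = of_real (bb1 r t * exp ((r^2 - r'^2) * t) * aa r t * exp (- (r^2) * t))"
        using r by (simp add: c1_def f_def FF_def)
      finally show ?thesis .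
    qed
    have k2: "snd (B x y t) * pdy u x y t = of_real (aa1 r t * exp ((r'^2 - r^2) * t) * bb r t * exp (- (r'^2) * t)) * Ephi r x"
    proof -
      have "snd (B x y t) * pdy u x y t = ((-\<i>) * (\<i> * (c2 t * of_real r' * g t * Ephi r x))) * (Ephi (-r') y * Ephi r' y)"
        unfolding B_def pdyu by (simp add: ac_simps)
      also have "\<dots> = c2 t * of_real r' * g t * Ephi r x" by (simp only: ii Ephi_inv mult_1_right)
      also have "c2 t * of_real r' * g t = of_real (aa1 r t * exp ((r'^2 - r^2) * t) * bb r t * exp (- (r'^2) * t))"
        using r by (simp add: c2_def g_def FF_def)
      finally show ?thesis .
    qed
    show "pdt T u x y t = lap u x y t + fst (B x y t) * pdx u x y t + snd (B x y t) * pdy u x y t"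
      unfolding k1 k2 X1 X2 lap_def pdxxu pdyyu pdtu
      by (simp add: f1_def g1_def f_def g_def FF_def FF1_def algebra_simps power2_eq_square)
  qed
  have P7: "\<forall>x y t. t \<in> {0..1 / (2 * r)} \<longrightarrow> u x y t = Ephi r x * of_real (exp (- r\<^sup>2 * t)) \<and> B x y t = 0"
  proof (intro allI impI)
    fix x y t assume t: "t \<in> {0..1 / (2 * r)}"
    then have "r * t \<le> 1/2" using r by (auto simp: field_simps)
    then have z: "aa r t = 1" "bb r t = 0" "aa1 r t = 0" "bb1 r t = 0"
      by (auto simp: aa_def bb_def aa1_def bb1_def hs_regions)
    show "u x y t = Ephi r x * of_real (exp (- r\<^sup>2 * t)) \<and> B x y t = 0"
      by (simp add: u_def B_def f_def g_def FF_def c1_def c2_def z zero_prod_def)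
  qed
  have P8: "\<forall>x y t. t \<in> {3 / r..T} \<longrightarrow> u x y t = Ephi r' y * of_real (exp (- r'\<^sup>2 * t)) \<and> B x y t = 0"
  proof (intro allI impI)
    fix x y t assume t: "t \<in> {3 / r..T}"
    then have "r * t \<ge> 3" using r by (auto simp: field_simps)
    then have z: "aa r t = 0" "bb r t = 1" "aa1 r t = 0" "bb1 r t = 0"
      by (auto simp: aa_def bb_def aa1_def bb1_def hs_regions)
    show "u x y t = Ephi r' y * of_real (exp (- r'\<^sup>2 * t)) \<and> B x y t = 0"
      by (simp add: u_def B_def f_def g_def FF_def c1_def c2_def z zero_prod_def)
  qed
  have P9: "C2_on {0..T} f" "C2_on {0..T} g" by (rule C2_on_real, (rule fd gd)+)+
  have P10: "\<forall>x y t. t \<in> {0..T} \<longrightarrow> u x y t = f t * Ephi r x + g t * Ephi r' y" by (simp add: u_def)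
  have P11: "\<forall>\<alpha>::nat. \<forall>t. \<alpha> \<le> 2 \<and> t \<in> {0..T} \<longrightarrow>
          norm (((dT T) ^^ \<alpha>) f t) \<le> 20 * r ^ (2 * \<alpha>) * exp (- r\<^sup>2 * t) \<and>
          norm (((dT T) ^^ \<alpha>) g t) \<le> 20 * r' ^ (2 * \<alpha>) * exp (- r'\<^sup>2 * t)"
  proof (intro allI impI)
    fix \<alpha> :: nat and t assume at: "\<alpha> \<le> 2 \<and> t \<in> {0..T}"
    then have t: "t \<in> {0..T}" by auto
    have hb: "0 \<le> hs z" "hs z \<le> 1" "\<bar>hs1 z\<bar> \<le> 2" "\<bar>hs2 z\<bar> \<le> 15" for z by (rule hs_bounds)+
    have ab: "\<bar>aa r t\<bar> \<le> 1" "\<bar>aa1 r t\<bar> \<le> 2*r" "\<bar>aa2 r t\<bar> \<le> 15*r^2"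
      using hb[of "r*t - 3/2"] r by (auto simp: aa_def aa1_def aa2_def abs_mult power2_eq_square)
    have r2: "r^2 \<le> r'^2" using r by (intro power_mono) auto
    have bb: "\<bar>bb r t\<bar> \<le> 1" "\<bar>bb1 r t\<bar> \<le> 2*r'" "\<bar>bb2 r t\<bar> \<le> 15*r'^2"
    proof -
      have "\<bar>hs1 (r*t - 1/2)\<bar> * r \<le> 2 * r'" using hb(3)[of "r*t - 1/2"] r by (intro mult_mono) auto
      moreover have "\<bar>hs2 (r*t - 1/2)\<bar> * (r * r) \<le> 15 * r'^2" using hb(4)[of "r*t - 1/2"] r r2 by (intro mult_mono) (auto simp: power2_eq_square)
      ultimately show "\<bar>bb r t\<bar> \<le> 1" "\<bar>bb1 r t\<bar> \<le> 2*r'" "\<bar>bb2 r t\<bar> \<le> 15*r'^2"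
        using hb[of "r*t - 1/2"] r by (auto simp: bb_def bb1_def bb2_def abs_mult mult.assoc)
    qed
    note fb = FF_bounds[of "aa r" t "aa1 r" r "aa2 r", OF ab r(1), folded f_def f1_def f2_def]
    have "r' \<ge> 1" using r by simp
    note gb = FF_bounds[of "bb r" t "bb1 r" r' "bb2 r", OF bb this, folded g_def g1_def g2_def]
    note df = dT_facts[OF fd(1,2) T t] and dg = dT_facts[OF gd(1,2) T t]
    have "\<alpha> = 0 \<or> \<alpha> = 1 \<or> \<alpha> = 2" using at by auto
    then show "norm (((dT T) ^^ \<alpha>) f t) \<le> 20 * r ^ (2 * \<alpha>) * exp (- r\<^sup>2 * t) \<and>
          norm (((dT T) ^^ \<alpha>) g t) \<le> 20 * r' ^ (2 * \<alpha>) * exp (- r'\<^sup>2 * t)"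
      using fb gb df dg by (auto simp: numeral_2_eq_2)
  qed
  show "let T = 7 / (2 * real_of_int k);
        S = {p :: real \<times> real \<times> real. 0 \<le> snd (snd p) \<and> snd (snd p) \<le> T};
        u1 = (\<lambda>x y t. exp (\<i> * of_real (real_of_int k * x)) * of_real (exp (- (real_of_int k)\<^sup>2 * t)));
        u2 = (\<lambda>x y t. exp (\<i> * of_real (real_of_int k' * y)) * of_real (exp (- (real_of_int k')\<^sup>2 * t)))
    in \<exists>(u :: real \<Rightarrow> real \<Rightarrow> real \<Rightarrow> complex) (B :: real \<Rightarrow> real \<Rightarrow> real \<Rightarrow> complex \<times> complex)
         (f :: real \<Rightarrow> complex) (g :: real \<Rightarrow> complex).
       periodic2 u \<and> periodic2 B \<and>
       C2_on S (\<lambda>(x, y, t). u x y t) \<and>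
       continuous_on S (\<lambda>(x, y, t). B x y t) \<and>
       (\<forall>x y t. t \<in> {0..T} \<longrightarrow> norm (B x y t) \<le> 2 + 2 * exp 420) \<and>
       (\<forall>x y t. t \<in> {0..T} \<longrightarrow>
          pdt T u x y t = lap u x y t + fst (B x y t) * pdx u x y t + snd (B x y t) * pdy u x y t) \<and>
       (\<forall>x y t. t \<in> {0..1 / (2 * real_of_int k)} \<longrightarrow> u x y t = u1 x y t \<and> B x y t = 0) \<and>
       (\<forall>x y t. t \<in> {3 / real_of_int k..T} \<longrightarrow> u x y t = u2 x y t \<and> B x y t = 0) \<and>
       C2_on {0..T} f \<and> C2_on {0..T} g \<and>
       (\<forall>x y t. t \<in> {0..T} \<longrightarrow>
          u x y t = f t * exp (\<i> * of_real (real_of_int k * x)) + g t * exp (\<i> * of_real (real_of_int k' * y))) \<and>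
       (\<forall>\<alpha>::nat. \<forall>t. \<alpha> \<le> 2 \<and> t \<in> {0..T} \<longrightarrow>
          norm (((dT T) ^^ \<alpha>) f t) \<le> 20 * (real_of_int k) ^ (2 * \<alpha>) * exp (- (real_of_int k)\<^sup>2 * t) \<and>
          norm (((dT T) ^^ \<alpha>) g t) \<le> 20 * (real_of_int k') ^ (2 * \<alpha>) * exp (- (real_of_int k')\<^sup>2 * t))"
    unfolding Let_def r_def[symmetric] r'_def[symmetric] T_def[symmetric] S_def[symmetric] Ephi_def[symmetric]
    apply (rule exI[of _ u], rule exI[of _ B], rule exI[of _ f], rule exI[of _ g])
    using P1 P2 P3 P4 P5 P6 P7 P8 P9 P10 P11 by blast
qed

end
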